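(* Let $P$ be an isothetic drawing of the Horton set of $n=2^k$ points with tree $T$, and let $1\le l\le k-1$. Let $P'$ be the result of pruning the $l$-th level of $T$ (see context). Then: (1) $P'$ is an isothetic drawing of the Horton set of $n/2$ points. (2) Suppose $l\le k-3$, and let $T'$ be the tree associated to $P'$. Let $Q'$ be a vertex of the $l'$-th level of $T'$ for some $l'>l$. Then there exists a vertex $Q$ in the $(l'+1)$-th level of $T$ with $Q'\subseteq Q$; moreover, whenever $S(Q')$ is defined (i.e. $Q'$ is not the root of $T'$ and has more than two points), $S(Q')\subseteq S(Q)$.
   Context: For a finite set $S$ of points in the plane with pairwise distinct $x$-coordinates, list its points in increasing order of $x$-coordinate as $p_0,\dots,p_{|S|-1}$ and set $S_{\mathrm{even}}=\{p_0,p_2,\dots\}$, $S_{\mathrm{odd}}=\{p_1,p_3,\dots\}$. For point sets $X,Y$, $X$ is high above $Y$ if every line through two points of $X$ lies strictly above every point of $Y$ and every line through two points of $Y$ lies strictly below every point of $X$. A Horton set of $2^k$ points is defined recursively: a set $H$ of $2^k$ points, no three collinear, with pairwise distinct $x$-coordinates, such that for $k=0$ it is a single point and for $k\ge1$ both $H_{\mathrm{even}}$ and $H_{\mathrm{odd}}$ are Horton sets of $2^{k-1}$ points and $H_{\mathrm{odd}}$ is high above $H_{\mathrm{even}}$. An isothetic drawing of the Horton set of $n=2^k$ points is a Horton set of $n$ points all of whose points have integer coordinates. For such a $P$, the tree $T$ is the complete rooted binary tree with root $P$ in which every vertex $Q$ with at least two points has left child $Q_{\mathrm{even}}$ and right child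 $Q_{\mathrm{odd}}$; the $i$-th level of $T$ is the set of its vertices consisting of exactly $2^i$ points. Pruning the $l$-th level of $T$ means removing from $P$ all points belonging to the vertices of the $l$-th level that are left children of their parent, or alternatively all points belonging to the vertices of the $l$-th level that are right children of their parent (either choice). For a non-root vertex $Q$ with more than two points, $S(Q)$ denotes the right child of $Q$ if $Q$ is the left child of its parent, and the left child of $Q$ otherwise (and analogously in $T'$). *)

theory Defs
  imports Main
begin

definition rank_x :: "('a::linorder \<times> 'b) set \<Rightarrow> ('a \<times> 'b) \<Rightarrow> nat" where
  "rank_x S p = card {q \<in> S. fst q < fst p}"

definition evens :: "('a::linorder \<times> 'b) set \<Rightarrow> ('a \<times> 'b) set" where
  "evens S = {p \<in> S. even (rank_x S p)}"

definition odds :: "('a::linorder \<times> 'b) set \<Rightarrow> ('a \<times> 'b) set" where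
  "odds S = {p \<in> S. odd (rank_x S p)}"

(* r lies strictly below the (non-vertical) line through p and q, where fst p < fst q *)
definition below_line :: "('a::linordered_idom \<times> 'a) \<Rightarrow> ('a \<times> 'a) \<Rightarrow> ('a \<times> 'a) \<Rightarrow> bool" where
  "below_line p q r \<longleftrightarrow>
     (fst q - fst p) * (snd r - snd p) < (snd q - snd p) * (fst r - fst p)"

definition above_line :: "('a::linordered_idom \<times> 'a) \<Rightarrow> ('a \<times> 'a) \<Rightarrow> ('a \<times> 'a) \<Rightarrow> bool" where
  "above_line p q r \<longleftrightarrow>
     (fst q - fst p) * (snd r - snd p) > (snd q - snd p) * (fst r - fst p)"

definition collinear3 :: "('a::linordered_idom \<times> 'a) \<Rightarrow> ('a \<times> 'a) \<Rightarrow> ('a \<times> 'a) \<Rightarrow> bool" where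
  "collinear3 p q r \<longleftrightarrow>
     (fst q - fst p) * (snd r - snd p) = (snd q - snd p) * (fst r - fst p)"

definition no_three_collinear :: "('a::linordered_idom \<times> 'a) set \<Rightarrow> bool" where
  "no_three_collinear S \<longleftrightarrow>
     (\<forall>p\<in>S. \<forall>q\<in>S. \<forall>r\<in>S. p \<noteq> q \<and> p \<noteq> r \<and> q \<noteq> r \<longrightarrow> \<not> collinear3 p q r)"

definition high_above :: "('a::linordered_idom \<times> 'a) set \<Rightarrow> ('a \<times> 'a) set \<Rightarrow> bool" where
  "high_above X Y \<longleftrightarrow>
     (\<forall>p\<in>X. \<forall>q\<in>X. fst p < fst q \<longrightarrow> (\<forall>r\<in>Y. below_line p q r)) \<and>
     (\<forall>p\<in>Y. \<forall>q\<in>Y. fst p < fst q \<longrightarrow> (\<forall>r\<in>X. above_line p q r))"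

fun horton :: "nat \<Rightarrow> ('a::linordered_idom \<times> 'a) set \<Rightarrow> bool" where
  "horton 0 H \<longleftrightarrow> finite H \<and> card H = 1"
| "horton (Suc k) H \<longleftrightarrow>
     finite H \<and> card H = 2 ^ Suc k \<and> no_three_collinear H \<and> inj_on fst H \<and>
     horton k (evens H) \<and> horton k (odds H) \<and> high_above (odds H) (evens H)"

definition isothetic_horton :: "nat \<Rightarrow> (int \<times> int) set \<Rightarrow> bool" where
  "isothetic_horton k P \<longleftrightarrow> horton k P"

inductive_set tree_vertices :: "('a::linorder \<times> 'b) set \<Rightarrow> ('a \<times> 'b) set set"
  for P :: "('a \<times> 'b) set" where
  root: "P \<in> tree_vertices P"
| left: "Q \<in> tree_vertices P \<Longrightarrow> card Q \<ge> 2 \<Longrightarrow> evens Q \<in> tree_vertices P"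
| right: "Q \<in> tree_vertices P \<Longrightarrow> card Q \<ge> 2 \<Longrightarrow> odds Q \<in> tree_vertices P"

definition tree_level :: "('a::linorder \<times> 'b) set \<Rightarrow> nat \<Rightarrow> ('a \<times> 'b) set set" where
  "tree_level P i = {Q \<in> tree_vertices P. card Q = 2 ^ i}"

definition is_left_child :: "('a::linorder \<times> 'b) set \<Rightarrow> ('a \<times> 'b) set \<Rightarrow> bool" where
  "is_left_child P Q \<longleftrightarrow> (\<exists>R \<in> tree_vertices P. card R \<ge> 2 \<and> Q = evens R)"

definition is_right_child :: "('a::linorder \<times> 'b) set \<Rightarrow> ('a \<times> 'b) set \<Rightarrow> bool" where
  "is_right_child P Q \<longleftrightarrow> (\<exists>R \<in> tree_vertices P. card R \<ge> 2 \<and> Q = odds R)"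

definition prune_left :: "('a::linorder \<times> 'b) set \<Rightarrow> nat \<Rightarrow> ('a \<times> 'b) set" where
  "prune_left P l = P - \<Union>{Q \<in> tree_level P l. is_left_child P Q}"

definition prune_right :: "('a::linorder \<times> 'b) set \<Rightarrow> nat \<Rightarrow> ('a \<times> 'b) set" where
  "prune_right P l = P - \<Union>{Q \<in> tree_level P l. is_right_child P Q}"

(* S(Q) in the tree with root P (meaningful for non-root Q with more than two points):
   the right child of Q if Q is a left child of its parent, the left child of Q otherwise *)
definition S_vertex :: "('a::linorder \<times> 'b) set \<Rightarrow> ('a \<times> 'b) set \<Rightarrow> ('a \<times> 'b) set" where
  "S_vertex P Q = (if is_left_child P Q then odds Q else evens Q)"

end

theory Submission
  imports Defs
begin


definition sorted_on :: "(nat \<Rightarrow> ('a::linorder \<times> 'b)) \<Rightarrow> nat \<Rightarrow> bool" where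
  "sorted_on f n \<longleftrightarrow> (\<forall>i j. i < j \<longrightarrow> j < n \<longrightarrow> fst (f i) < fst (f j))"

lemma sorted_on_less_iff:
  assumes "sorted_on f n" "i < n" "j < n"
  shows "fst (f i) < fst (f j) \<longleftrightarrow> i < j"
  using assms unfolding sorted_on_def
  by (metis less_asym' linorder_neqE_nat)

lemma sorted_on_inj: "sorted_on f n \<Longrightarrow> inj_on f {..<n}"
  unfolding inj_on_def sorted_on_def
  by (metis lessThan_iff linorder_neqE_nat order_less_irrefl)

lemma rank_sorted:
  assumes "sorted_on f n" "j < n"
  shows "rank_x (f ` {..<n}) (f j) = j"
proof -
  have "{q \<in> f ` {..<n}. fst q < fst (f j)} = f ` {..<j}"
    using sorted_on_less_iff[OF assms(1) _ assms(2)] assms(2) by auto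
  moreover have "inj_on f {..<j}"
    using sorted_on_inj[OF assms(1)] assms(2) by (auto intro: inj_on_subset)
  ultimately show ?thesis unfolding rank_x_def by (simp add: card_image)
qed

lemma evens_sorted:
  assumes "sorted_on f (2*n)"
  shows "evens (f ` {..<2*n}) = (\<lambda>t. f (2*t)) ` {..<n}"
proof -
  have "evens (f ` {..<2*n}) = f ` {j. j < 2*n \<and> even j}"
    unfolding evens_def using rank_sorted[OF assms] by auto
  also have "{j. j < 2*n \<and> even j} = (\<lambda>t. 2*t) ` {..<n}"
    by (auto elim!: evenE)
  finally show ?thesis by (simp add: image_image)
qed

lemma odds_sorted:
  assumes "sorted_on f (2*n)"
  shows "odds (f ` {..<2*n}) = (\<lambda>t. f (2*t+1)) ` {..<n}"
proof -
  have "odds (f ` {..<2*n}) = f ` {j. j < 2*n \<and> odd j}"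
    unfolding odds_def using rank_sorted[OF assms] by auto
  also have "{j. j < 2*n \<and> odd j} = (\<lambda>t. 2*t+1) ` {..<n}"
    by (auto elim!: oddE)
  finally show ?thesis by (simp add: image_image)
qed

lemma sorted_on_comp:
  assumes "sorted_on f N" "\<And>i j. i < j \<Longrightarrow> j < n \<Longrightarrow> h i < h j" "\<And>i. i < n \<Longrightarrow> h i < N"
  shows "sorted_on (\<lambda>t. f (h t)) n"
  using assms unfolding sorted_on_def by (meson order.strict_trans)

lemma exists_sorted:
  fixes P :: "('a::linorder \<times> 'b) set"
  assumes "finite P" "inj_on fst P"
  shows "\<exists>f. sorted_on f (card P) \<and> P = f ` {..<card P}"
proof -
  define xs where "xs = sorted_list_of_set (fst ` P)"
  have len: "length xs = card P" unfolding xs_def using assms by (simp add: card_image)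
  have ss: "sorted_wrt (<) xs" unfolding xs_def by simp
  have setxs: "set xs = fst ` P" unfolding xs_def using assms by simp
  define f where "f i = inv_into P fst (xs ! i)" for i
  have fin: "i < card P \<Longrightarrow> f i \<in> P \<and> fst (f i) = xs ! i" for i
    unfolding f_def using len setxs
    by (metis f_inv_into_f inv_into_into nth_mem)
  have "sorted_on f (card P)"
    unfolding sorted_on_def using fin ss len
    by (metis order.strict_trans sorted_wrt_nth_less)
  moreover have "P = f ` {..<card P}"
  proof
    show "f ` {..<card P} \<subseteq> P" using fin by auto
    show "P \<subseteq> f ` {..<card P}"
    proof
      fix p assume p: "p \<in> P"
      then have "fst p \<in> set xs" using setxs by auto
      then obtain i where i: "i < length xs" "xs ! i = fst p" by (metis in_set_conv_nth)
      have "f i = p" unfolding f_def using i p assms(2) by (simp add: inv_into_f_f)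
      then show "p \<in> f ` {..<card P}" using i len by auto
    qed
  qed
  ultimately show ?thesis by blast
qed



definition ins :: "nat \<Rightarrow> nat \<Rightarrow> nat \<Rightarrow> nat" where
  "ins e c j = j + 2^e * (j div 2^e) + c * 2^e"

lemma ins_mono: "i < j \<Longrightarrow> ins e c i < ins e c j"
  unfolding ins_def by (simp add: add_less_le_mono div_le_mono)

lemma ins_0: "ins 0 c j = 2*j + c"
  unfolding ins_def by simp

lemma ins_double: "ins (Suc e) c (2*t) = 2 * ins e c t"
  unfolding ins_def by (simp add: div_mult2_eq)

lemma ins_double1: "ins (Suc e) c (2*t+1) = 2 * ins e c t + 1"
proof -
  have "(2*t+1) div (2 * 2^e) = t div 2^e"
    by (simp add: div_mult2_eq)
  then show ?thesis unfolding ins_def by simp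
qed

lemma ins_double1': "ins (Suc e) c (Suc (2*t)) = Suc (2 * ins e c t)"
  using ins_double1 by simp

lemma ins_alt: "ins e c j = (c * 2^e + j mod 2^e) + 2^(Suc e) * (j div 2^e)"
proof -
  have aux: "j = a*q + r \<Longrightarrow> j + a*q + c*a = (c*a + r) + (2*a)*q" for a q r :: nat
    by (simp add: algebra_simps)
  show ?thesis unfolding ins_def
    using aux[of "2^e" "j div 2^e" "j mod 2^e"] by simp
qed

lemma ins_div: "c \<le> 1 \<Longrightarrow> ins e c j div 2^(Suc e) = j div 2^e"
proof -
  assume c: "c \<le> 1"
  have lt: "c * 2^e + j mod 2^e < 2^Suc e"
  proof -
    have a: "c * 2^e \<le> (2::nat)^e" using mult_right_mono[OF c, of "2^e"] by simp
    have b: "j mod 2^e < (2::nat)^e" by simp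
    have "(2::nat)^Suc e = 2^e + 2^e" by simp
    then show ?thesis using a b by linarith
  qed
  have "ins e c j div 2^(Suc e) = j div 2^e + (c * 2^e + j mod 2^e) div 2^Suc e"
    unfolding ins_alt by (rule div_mult_self2) simp
  also have "\<dots> = j div 2^e" using lt by simp
  finally show ?thesis .
qed

lemma ins_bound:
  assumes "j < 2^m" "e < m" "c \<le> 1"
  shows "ins e c j < 2^(Suc m)"
proof -
  have "j div 2^e < 2^(m-e)"
    using assms by (simp add: div_less_iff_less_mult power_add[symmetric])
  then have "ins e c j div 2^(Suc e) < 2^(m-e)" using ins_div[OF assms(3)] by simp
  then have "ins e c j < 2^(m-e) * 2^(Suc e)"
    by (simp add: div_less_iff_less_mult)
  also have "\<dots> = 2^Suc m" using assms by (simp add: power_add[symmetric])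
  finally show ?thesis .
qed

lemma ins_mod: "d \<le> e \<Longrightarrow> ins e c j mod 2^d = j mod 2^d"
proof -
  assume "d \<le> e"
  then obtain x where "(2::nat)^e = 2^d * x" by (metis le_imp_power_dvd dvdE)
  then show ?thesis unfolding ins_def
    by (metis add.commute mod_mult_self2 mult.assoc distrib_right mult.commute add.assoc)
qed

lemma high_above_mono:
  "high_above X Y \<Longrightarrow> X' \<subseteq> X \<Longrightarrow> Y' \<subseteq> Y \<Longrightarrow> high_above X' Y'"
  unfolding high_above_def by blast

lemma ntc_mono: "no_three_collinear X \<Longrightarrow> Y \<subseteq> X \<Longrightarrow> no_three_collinear Y"
  unfolding no_three_collinear_def by blast

lemma prune_horton:
  fixes f :: "nat \<Rightarrow> ('a::linordered_idom \<times> 'a)"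
  assumes "horton (Suc m) (f ` {..<2^Suc m})" "sorted_on f (2^Suc m)" "e < m" "c \<le> 1"
  shows "horton m ((\<lambda>j. f (ins e c j)) ` {..<2^m})"
  using assms
proof (induction e arbitrary: m f)
  case 0
  have ev: "evens (f ` {..<2*2^m}) = (\<lambda>t. f (2*t)) ` {..<2^m}"
    using evens_sorted[of f "2^m"] 0 by simp
  have od: "odds (f ` {..<2*2^m}) = (\<lambda>t. f (2*t+1)) ` {..<2^m}"
    using odds_sorted[of f "2^m"] 0 by simp
  have h: "horton m (evens (f ` {..<2*2^m}))" "horton m (odds (f ` {..<2*2^m}))"
    using 0(1) by auto
  show ?case
  proof (cases "c = 0")
    case True then show ?thesis using h ev by (simp add: ins_0)
  next
    case False then have "c = 1" using 0 by simp
    then show ?thesis using h od by (simp add: ins_0)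
  qed
next
  case (Suc e)
  obtain m' where m: "m = Suc m'" using Suc.prems(3) by (cases m) auto
  have e': "e < m'" using Suc.prems(3) m by simp
  define H where "H = f ` {..<2^Suc m}"
  define g where "g = (\<lambda>j. f (ins (Suc e) c j))"
  have insb: "\<And>j. j < 2^m \<Longrightarrow> ins (Suc e) c j < 2^Suc m"
    using ins_bound Suc.prems by blast
  have gs: "sorted_on g (2^m)"
    unfolding g_def apply (rule sorted_on_comp[OF Suc.prems(2)])
    apply (erule ins_mono) apply (erule insb) done
  have GH: "g ` {..<2^m} \<subseteq> H" unfolding H_def g_def using insb by auto
  have hH: "finite H" "card H = 2^Suc m" "no_three_collinear H" "inj_on fst H"
    "horton m (evens H)" "horton m (odds H)" "high_above (odds H) (evens H)"
    using Suc.prems(1) unfolding H_def by auto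
  have evH: "evens H = (\<lambda>t. f (2*t)) ` {..<2^m}"
    unfolding H_def using evens_sorted[of f "2^m"] Suc.prems by simp
  have odH: "odds H = (\<lambda>t. f (2*t+1)) ` {..<2^m}"
    unfolding H_def using odds_sorted[of f "2^m"] Suc.prems by simp
  have s2: "sorted_on (\<lambda>t. f (2*t)) (2^m)"
    using Suc.prems(2) by (rule sorted_on_comp) auto
  have s3: "sorted_on (\<lambda>t. f (2*t+1)) (2^m)"
    using Suc.prems(2) by (rule sorted_on_comp) auto
  have evG: "evens (g ` {..<2^m}) = (\<lambda>t. f (2 * ins e c t)) ` {..<2^m'}"
    using evens_sorted[of g "2^m'"] gs m by (simp add: g_def ins_double)
  have odG: "odds (g ` {..<2^m}) = (\<lambda>t. f (2 * ins e c t + 1)) ` {..<2^m'}"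
    using odds_sorted[of g "2^m'"] gs m by (simp add: g_def ins_double1')
  have IH1: "horton m' (evens (g ` {..<2^m}))"
    unfolding evG using Suc.IH[of m' "\<lambda>t. f (2*t)"] hH(5) evH s2 m e' Suc.prems(4) by simp
  have IH2: "horton m' (odds (g ` {..<2^m}))"
    unfolding odG using Suc.IH[of m' "\<lambda>t. f (2*t+1)"] hH(6) odH s3 m e' Suc.prems(4) by simp
  have insb': "\<And>t. t < 2^m' \<Longrightarrow> ins e c t < 2^m"
    using ins_bound e' Suc.prems(4) m by blast
  have sub1: "evens (g ` {..<2^m}) \<subseteq> evens H" unfolding evG evH using insb' by auto
  have sub2: "odds (g ` {..<2^m}) \<subseteq> odds H" unfolding odG odH using insb' by auto
  have inj: "inj_on g {..<2^m}"
    using sorted_on_inj[OF gs] .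
  show ?case
    unfolding g_def[symmetric] m horton.simps
  proof (intro conjI)
    show "finite (g ` {..<2 ^ Suc m'})" by simp
    show "card (g ` {..<2 ^ Suc m'}) = 2 ^ Suc m'" using inj m by (simp add: card_image)
    show "no_three_collinear (g ` {..<2 ^ Suc m'})" using ntc_mono hH(3) GH m by metis
    show "inj_on fst (g ` {..<2 ^ Suc m'})" using inj_on_subset hH(4) GH m by metis
    show "horton m' (evens (g ` {..<2 ^ Suc m'}))" using IH1 m by simp
    show "horton m' (odds (g ` {..<2 ^ Suc m'}))" using IH2 m by simp
    show "high_above (odds (g ` {..<2 ^ Suc m'})) (evens (g ` {..<2 ^ Suc m'}))"
      using high_above_mono[OF hH(7) sub2 sub1] m by simp
  qed
qed



definition vtx :: "(nat \<Rightarrow> 'p) \<Rightarrow> nat \<Rightarrow> nat \<Rightarrow> nat \<Rightarrow> 'p set" where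
  "vtx f k d r = (\<lambda>t. f (2^d*t + r)) ` {..<2^(k-d)}"

lemma aff_bound:
  assumes "d \<le> k" "r < 2^d" "t < 2^(k-d)"
  shows "2^d*t + r < (2::nat)^k"
proof -
  have "2^d*t + r < 2^d*(t+1)" using assms by simp
  also have "\<dots> \<le> 2^d * 2^(k-d)" using assms by (intro mult_left_mono) auto
  also have "\<dots> = 2^k" using assms by (simp add: power_add[symmetric])
  finally show ?thesis .
qed

lemma vtx_sorted:
  assumes "sorted_on f (2^k)" "d \<le> k" "r < 2^d"
  shows "sorted_on (\<lambda>t. f (2^d*t + r)) (2^(k-d))"
  apply (rule sorted_on_comp[OF assms(1)])
   apply simp
  using aff_bound assms by blast

lemma vtx_card:
  assumes "sorted_on f (2^k)" "d \<le> k" "r < 2^d"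
  shows "card (vtx f k d r) = 2^(k-d)"
  unfolding vtx_def using sorted_on_inj[OF vtx_sorted[OF assms]] by (simp add: card_image)

lemma vtx_root: "vtx f k 0 0 = f ` {..<2^k}"
  unfolding vtx_def by simp

lemma evens_vtx:
  assumes "sorted_on f (2^k)" "d < k" "r < 2^d"
  shows "evens (vtx f k d r) = vtx f k (Suc d) r"
proof -
  have e: "(2::nat)^(k-d) = 2 * 2^(k - Suc d)" using assms
    by (metis Suc_diff_Suc power_Suc)
  have s: "sorted_on (\<lambda>t. f (2^d*t + r)) (2 * 2^(k - Suc d))"
    using vtx_sorted[of f k d r] assms e by simp
  show ?thesis unfolding vtx_def e
    using evens_sorted[OF s] by (simp add: mult.assoc mult.left_commute)
qed

lemma odds_vtx:
  assumes "sorted_on f (2^k)" "d < k" "r < 2^d"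
  shows "odds (vtx f k d r) = vtx f k (Suc d) (r + 2^d)"
proof -
  have e: "(2::nat)^(k-d) = 2 * 2^(k - Suc d)" using assms
    by (metis Suc_diff_Suc power_Suc)
  have s: "sorted_on (\<lambda>t. f (2^d*t + r)) (2 * 2^(k - Suc d))"
    using vtx_sorted[of f k d r] assms e by simp
  have eq: "2^d*(2*t+1) + r = 2^Suc d * t + (r + 2^d)" for t :: nat
    by (simp add: algebra_simps)
  show ?thesis unfolding vtx_def e
    using odds_sorted[OF s] by (simp only: eq)
qed

lemma tree_vertices_char:
  assumes "sorted_on f (2^k)"
  shows "tree_vertices (f ` {..<2^k}) = {vtx f k d r | d r. d \<le> k \<and> r < 2^d}"
proof
  show "tree_vertices (f ` {..<2^k}) \<subseteq> {vtx f k d r | d r. d \<le> k \<and> r < 2^d}"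
  proof
    fix Q assume "Q \<in> tree_vertices (f ` {..<2^k})"
    then show "Q \<in> {vtx f k d r | d r. d \<le> k \<and> r < 2^d}"
    proof induction
      case root
      have "vtx f k 0 0 \<in> {vtx f k d r | d r. d \<le> k \<and> r < 2^d}" by fastforce
      then show ?case using vtx_root[of f k] by simp
    next
      case (left Q)
      then obtain d r where Q: "Q = vtx f k d r" "d \<le> k" "r < 2^d" by auto
      have "d < k"
      proof (rule ccontr)
        assume "\<not> d < k" then have "d = k" using Q by simp
        then show False using left vtx_card[OF assms Q(2,3)] Q by simp
      qed
      moreover have "r < 2^Suc d" using Q(3) by simp
      ultimately have "evens Q = vtx f k (Suc d) r" "Suc d \<le> k" "r < 2^Suc d"
        using evens_vtx[OF assms \<open>d < k\<close> Q(3)] Q by auto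
      then show ?case by blast
    next
      case (right Q)
      then obtain d r where Q: "Q = vtx f k d r" "d \<le> k" "r < 2^d" by auto
      have "d < k"
      proof (rule ccontr)
        assume "\<not> d < k" then have "d = k" using Q by simp
        then show False using right vtx_card[OF assms Q(2,3)] Q by simp
      qed
      moreover have "r + 2^d < 2^Suc d" using Q by simp
      ultimately have "odds Q = vtx f k (Suc d) (r + 2^d)" "Suc d \<le> k" "r + 2^d < 2^Suc d"
        using odds_vtx[OF assms \<open>d < k\<close> Q(3)] Q by auto
      then show ?case by blast
    qed
  qed
  show "{vtx f k d r | d r. d \<le> k \<and> r < 2^d} \<subseteq> tree_vertices (f ` {..<2^k})"
  proof -
    have "\<forall>r < 2^d. d \<le> k \<longrightarrow> vtx f k d r \<in> tree_vertices (f ` {..<2^k})" for d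
    proof (induction d)
      case 0
      then show ?case using vtx_root[of f k] tree_vertices.root by auto
    next
      case (Suc d)
      show ?case
      proof (intro allI impI)
        fix r :: nat assume r: "r < 2^Suc d" and dk: "Suc d \<le> k"
        have cardge: "card (vtx f k d r') \<ge> 2" if "r' < 2^d" for r'
        proof -
          have "(2::nat)^1 \<le> 2^(k-d)" using dk by (intro power_increasing) auto
          then show ?thesis using vtx_card[OF assms _ that] dk by simp
        qed
        show "vtx f k (Suc d) r \<in> tree_vertices (f ` {..<2^k})"
        proof (cases "r < 2^d")
          case True
          then have "vtx f k d r \<in> tree_vertices (f ` {..<2^k})" using Suc.IH dk by simp
          then show ?thesis using tree_vertices.left[OF _ cardge[OF True]] evens_vtx[OF assms _ True] dk by simp
        next
          case False
          define r' where "r' = r - 2^d"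
          have r': "r = r' + 2^d" "r' < 2^d" using r False unfolding r'_def by auto
          then have "vtx f k d r' \<in> tree_vertices (f ` {..<2^k})" using Suc.IH dk by simp
          then show ?thesis using tree_vertices.right[OF _ cardge[OF r'(2)]] odds_vtx[OF assms _ r'(2)] dk r' by simp
        qed
      qed
    qed
    then show ?thesis by auto
  qed
qed



lemma idx_eq:
  assumes "d \<le> k" "r < 2^d"
  shows "(\<lambda>t. 2^d*t + r) ` {..<2^(k-d)} = {j. j < (2::nat)^k \<and> j mod 2^d = r}"
proof
  show "(\<lambda>t. 2^d*t + r) ` {..<2^(k-d)} \<subseteq> {j. j < 2^k \<and> j mod 2^d = r}"
    using aff_bound[OF assms] assms by auto
  show "{j. j < 2^k \<and> j mod 2^d = r} \<subseteq> (\<lambda>t. 2^d*t + r) ` {..<2^(k-d)}"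
  proof
    fix j assume j: "j \<in> {j. j < (2::nat)^k \<and> j mod 2^d = r}"
    have "j = 2^d*(j div 2^d) + j mod 2^d" by simp
    moreover have jm: "j mod 2^d = r" using j by simp
    ultimately have "j = 2^d*(j div 2^d) + r" by (simp only: jm)
    moreover have "j div 2^d < 2^(k-d)"
      using j assms by (simp add: div_less_iff_less_mult power_add[symmetric])
    ultimately show "j \<in> (\<lambda>t. 2^d*t + r) ` {..<2^(k-d)}" by blast
  qed
qed

lemma vtx_idx:
  assumes "d \<le> k" "r < 2^d"
  shows "vtx f k d r = f ` {j. j < 2^k \<and> j mod 2^d = r}"
  unfolding vtx_def idx_eq[OF assms, symmetric] by (simp add: image_image)

lemma vtx_inj:
  assumes "sorted_on f (2^k)" "d1 \<le> k" "r1 < 2^d1" "d2 \<le> k" "r2 < 2^d2"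
    and eq: "vtx f k d1 r1 = vtx f k d2 r2"
  shows "d1 = d2 \<and> r1 = r2"
proof -
  have "(2::nat)^(k-d1) = 2^(k-d2)" using vtx_card[OF assms(1,2,3)] vtx_card[OF assms(1,4,5)] eq by simp
  then have d: "d1 = d2" using assms by simp
  have "r1 < 2^k" using assms by (meson less_le_trans one_less_numeral_iff power_increasing_iff semiring_norm(76) le_trans power_increasing)
  have "r1 \<in> {j. j < 2^k \<and> j mod 2^d1 = r1}" using \<open>r1 < 2^k\<close> assms(3) by simp
  then have "f r1 \<in> vtx f k d1 r1"
    by (simp add: vtx_idx[OF assms(2,3)])
  then have "f r1 \<in> vtx f k d2 r2" using eq by simp
  then have "f r1 \<in> f ` {j. j < 2^k \<and> j mod 2^d2 = r2}"
    unfolding vtx_idx[OF assms(4,5)] .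
  then obtain j where j: "j < 2^k" "j mod 2^d2 = r2" "f r1 = f j" by blast
  have "r1 = j" using sorted_on_inj[OF assms(1)] j \<open>r1 < 2^k\<close> by (auto dest: inj_onD)
  then show ?thesis using j d assms(3) by simp
qed

lemma left_child_iff:
  assumes "sorted_on f (2^k)" "1 \<le> d" "d \<le> k" "r < 2^d"
  shows "is_left_child (f ` {..<2^k}) (vtx f k d r) \<longleftrightarrow> r < 2^(d-1)"
proof
  assume "is_left_child (f ` {..<2^k}) (vtx f k d r)"
  then obtain R where R: "R \<in> tree_vertices (f ` {..<2^k})" "card R \<ge> 2" "vtx f k d r = evens R"
    unfolding is_left_child_def by auto
  then obtain d0 r0 where R0: "R = vtx f k d0 r0" "d0 \<le> k" "r0 < 2^d0"
    using tree_vertices_char[OF assms(1)] by auto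
  have "d0 < k"
  proof (rule ccontr)
    assume "\<not> d0 < k" then have "d0 = k" using R0 by simp
    then show False using R vtx_card[OF assms(1) R0(2,3)] R0 by simp
  qed
  then have "vtx f k d r = vtx f k (Suc d0) r0" using R R0 evens_vtx[OF assms(1)] by simp
  moreover have "Suc d0 \<le> k" "r0 < 2^Suc d0" using \<open>d0 < k\<close> R0 by auto
  ultimately have "d = Suc d0 \<and> r = r0"
    using vtx_inj[OF assms(1) assms(3,4)] by blast
  then show "r < 2^(d-1)" using R0 by simp
next
  assume r: "r < 2^(d-1)"
  obtain d0 where d0: "d = Suc d0" using assms by (cases d) auto
  have "card (vtx f k d0 r) \<ge> 2"
  proof -
    have "(2::nat)^1 \<le> 2^(k-d0)" using d0 assms by (intro power_increasing) auto
    then show ?thesis using vtx_card[OF assms(1), of d0 r] r d0 assms by simp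
  qed
  moreover have "vtx f k d0 r \<in> tree_vertices (f ` {..<2^k})"
  proof -
    have "d0 \<le> k" "r < 2^d0" using r d0 assms by auto
    then show ?thesis unfolding tree_vertices_char[OF assms(1)] by blast
  qed
  moreover have "evens (vtx f k d0 r) = vtx f k d r" using evens_vtx[OF assms(1)] r d0 assms by simp
  ultimately show "is_left_child (f ` {..<2^k}) (vtx f k d r)"
    unfolding is_left_child_def by metis
qed

lemma right_child_iff:
  assumes "sorted_on f (2^k)" "1 \<le> d" "d \<le> k" "r < 2^d"
  shows "is_right_child (f ` {..<2^k}) (vtx f k d r) \<longleftrightarrow> \<not> r < 2^(d-1)"
proof
  assume "is_right_child (f ` {..<2^k}) (vtx f k d r)"
  then obtain R where R: "R \<in> tree_vertices (f ` {..<2^k})" "card R \<ge> 2" "vtx f k d r = odds R"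
    unfolding is_right_child_def by auto
  then obtain d0 r0 where R0: "R = vtx f k d0 r0" "d0 \<le> k" "r0 < 2^d0"
    using tree_vertices_char[OF assms(1)] by auto
  have "d0 < k"
  proof (rule ccontr)
    assume "\<not> d0 < k" then have "d0 = k" using R0 by simp
    then show False using R vtx_card[OF assms(1) R0(2,3)] R0 by simp
  qed
  then have "vtx f k d r = vtx f k (Suc d0) (r0 + 2^d0)" using R R0 odds_vtx[OF assms(1)] by simp
  moreover have "Suc d0 \<le> k" "r0 + 2^d0 < 2^Suc d0" using \<open>d0 < k\<close> R0 by auto
  ultimately have "d = Suc d0 \<and> r = r0 + 2^d0"
    using vtx_inj[OF assms(1) assms(3,4)] by blast
  then show "\<not> r < 2^(d-1)" by simp
next
  assume r: "\<not> r < 2^(d-1)"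
  obtain d0 where d0: "d = Suc d0" using assms by (cases d) auto
  define r0 where "r0 = r - 2^d0"
  have r0: "r = r0 + 2^d0" "r0 < 2^d0" using r d0 assms(4) unfolding r0_def by auto
  have "card (vtx f k d0 r0) \<ge> 2"
  proof -
    have "(2::nat)^1 \<le> 2^(k-d0)" using d0 assms by (intro power_increasing) auto
    then show ?thesis using vtx_card[OF assms(1), of d0 r0] r0 d0 assms by simp
  qed
  moreover have "vtx f k d0 r0 \<in> tree_vertices (f ` {..<2^k})"
  proof -
    have "d0 \<le> k" using d0 assms by auto
    then show ?thesis unfolding tree_vertices_char[OF assms(1)] using r0 by blast
  qed
  moreover have "odds (vtx f k d0 r0) = vtx f k d r" using odds_vtx[OF assms(1)] r0 d0 assms by simp
  ultimately show "is_right_child (f ` {..<2^k}) (vtx f k d r)"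
    unfolding is_right_child_def by metis
qed

lemma tree_level_char:
  assumes "sorted_on f (2^k)"
  shows "tree_level (f ` {..<2^k}) l = (if l \<le> k then {vtx f k (k-l) r | r. r < 2^(k-l)} else {})"
proof -
  have "tree_level (f ` {..<2^k}) l = {Q. \<exists>d r. Q = vtx f k d r \<and> d \<le> k \<and> r < 2^d \<and> card Q = 2^l}"
    unfolding tree_level_def tree_vertices_char[OF assms] by auto
  also have "\<dots> = {Q. \<exists>d r. Q = vtx f k d r \<and> d \<le> k \<and> r < 2^d \<and> l = k - d}"
  proof -
    have "card (vtx f k d r) = 2^l \<longleftrightarrow> l = k - d" if "d \<le> k" "r < 2^d" for d r
      using vtx_card[OF assms that] by auto
    then show ?thesis by blast
  qed
  also have "\<dots> = (if l \<le> k then {vtx f k (k-l) r | r. r < 2^(k-l)} else {})"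
  proof (cases "l \<le> k")
    case True
    have "(\<exists>d r. Q = vtx f k d r \<and> d \<le> k \<and> r < 2^d \<and> l = k - d) \<longleftrightarrow>
          (\<exists>r. Q = vtx f k (k-l) r \<and> r < 2^(k-l))" for Q
    proof
      assume "\<exists>d r. Q = vtx f k d r \<and> d \<le> k \<and> r < 2^d \<and> l = k - d"
      then obtain d r where dr: "Q = vtx f k d r" "d \<le> k" "r < 2^d" "l = k - d" by blast
      then have dkl: "d = k - l" by simp
      show "\<exists>r. Q = vtx f k (k-l) r \<and> r < 2^(k-l)" unfolding dkl[symmetric] using dr by blast
    next
      assume "\<exists>r. Q = vtx f k (k-l) r \<and> r < 2^(k-l)"
      then obtain r where r: "Q = vtx f k (k-l) r" "r < 2^(k-l)" by blast
      show "\<exists>d r. Q = vtx f k d r \<and> d \<le> k \<and> r < 2^d \<and> l = k - d"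
        apply (rule exI[of _ "k-l"]) apply (rule exI[of _ r]) using r True by simp
    qed
    then have "{Q. \<exists>d r. Q = vtx f k d r \<and> d \<le> k \<and> r < 2^d \<and> l = k - d}
        = {vtx f k (k-l) r | r. r < 2^(k-l)}" by blast
    with True show ?thesis by simp
  next
    case False then show ?thesis by auto
  qed
  finally show ?thesis .
qed



lemma ins_mod_Suc: "c \<le> 1 \<Longrightarrow> ins e c j mod 2^(Suc e) = c * 2^e + j mod 2^e"
proof -
  assume c: "c \<le> 1"
  have lt: "c * 2^e + j mod 2^e < 2^Suc e"
  proof -
    have a: "c * 2^e \<le> (2::nat)^e" using mult_right_mono[OF c, of "2^e"] by simp
    have b: "j mod 2^e < (2::nat)^e" by simp
    have "(2::nat)^Suc e = 2^e + 2^e" by simp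
    then show ?thesis using a b by linarith
  qed
  show ?thesis unfolding ins_alt using lt by simp
qed

lemma ins_image:
  assumes "e < m" "c \<le> 1"
  shows "ins e c ` {..<2^m} = {j. j < 2^Suc m \<and> (j mod 2^Suc e < 2^e \<longleftrightarrow> c = 0)}"
proof
  show "ins e c ` {..<2^m} \<subseteq> {j. j < 2^Suc m \<and> (j mod 2^Suc e < 2^e \<longleftrightarrow> c = 0)}"
  proof
    fix x assume "x \<in> ins e c ` {..<2^m}"
    then obtain j where j: "j < 2^m" "x = ins e c j" by auto
    have "x < 2^Suc m" using ins_bound[OF j(1) assms] j by simp
    moreover have "x mod 2^Suc e < 2^e \<longleftrightarrow> c = 0"
      using ins_mod_Suc[OF assms(2), of e j] j assms(2)
      by (cases "c = 0") (auto simp: le_Suc_eq)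
    ultimately show "x \<in> {j. j < 2^Suc m \<and> (j mod 2^Suc e < 2^e \<longleftrightarrow> c = 0)}" by simp
  qed
  show "{j. j < 2^Suc m \<and> (j mod 2^Suc e < 2^e \<longleftrightarrow> c = 0)} \<subseteq> ins e c ` {..<2^m}"
  proof
    fix j assume j: "j \<in> {j. j < (2::nat)^Suc m \<and> (j mod 2^Suc e < 2^e \<longleftrightarrow> c = 0)}"
    define q where "q = j div 2^Suc e"
    define r where "r = j mod 2^e"
    define j' where "j' = 2^e * q + r"
    have r: "r < 2^e" unfolding r_def by simp
    have q: "q < 2^(m-e)" unfolding q_def using j assms
      by (simp add: div_less_iff_less_mult power_add[symmetric] del: power_Suc)
    have j'b: "j' < 2^m" unfolding j'_def using aff_bound[of e m r q] r q assms by simp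
    have j'd: "j' div 2^e = q" "j' mod 2^e = r" unfolding j'_def using r by simp_all
    have p2: "(2::nat)^Suc e = 2^e * 2" by simp
    have jm: "j mod 2^Suc e = 2^e * (j div 2^e mod 2) + r"
      unfolding r_def p2 by (rule mod_mult2_eq)
    have jc: "j mod 2^Suc e < 2^e \<longleftrightarrow> c = 0" using j by simp
    have bit: "j div 2^e mod 2 = c"
    proof -
      have "j div 2^e mod 2 = 0 \<or> j div 2^e mod 2 = 1" by auto
      then show ?thesis
      proof
        assume b: "j div 2^e mod 2 = 0"
        then have "j mod 2^Suc e < 2^e" using jm r by simp
        then show ?thesis using jc b by simp
      next
        assume b: "j div 2^e mod 2 = 1"
        then have "\<not> j mod 2^Suc e < 2^e" using jm by simp
        then show ?thesis using jc b assms(2) by simp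
      qed
    qed
    have A: "ins e c j' = (c * 2^e + r) + 2^Suc e * q" unfolding ins_alt j'd ..
    have B: "j = 2^Suc e * q + j mod 2^Suc e" unfolding q_def by simp
    have C: "j mod 2^Suc e = c * 2^e + r" using jm bit by (simp add: mult.commute)
    have "ins e c j' = j" using A B C by linarith
    then show "j \<in> ins e c ` {..<2^m}" using j'b by force
  qed
qed

lemma union_vtx:
  assumes "D \<le> k"
  shows "\<Union>{vtx f k D r | r. r < 2^D \<and> Pr r} = f ` {j. j < 2^k \<and> Pr (j mod 2^D)}"
proof (rule set_eqI, rule iffI)
  fix x assume "x \<in> \<Union>{vtx f k D r | r. r < 2^D \<and> Pr r}"
  then obtain r where r: "r < 2^D" "Pr r" "x \<in> vtx f k D r" by blast
  have "x \<in> f ` {j. j < 2^k \<and> j mod 2^D = r}" using r(3) unfolding vtx_idx[OF assms r(1)] .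
  then show "x \<in> f ` {j. j < 2^k \<and> Pr (j mod 2^D)}" using r(2) by auto
next
  fix x assume "x \<in> f ` {j. j < 2^k \<and> Pr (j mod 2^D)}"
  then obtain j where j: "x = f j" "j < 2^k" "Pr (j mod 2^D)" by blast
  have r: "j mod 2^D < 2^D" by simp
  have "x \<in> vtx f k D (j mod 2^D)" unfolding vtx_idx[OF assms r] using j by blast
  then show "x \<in> \<Union>{vtx f k D r | r. r < 2^D \<and> Pr r}" using r j by blast
qed

lemma prune_char:
  assumes "sorted_on f (2^Suc m)" "1 \<le> l" "l \<le> m" "c \<le> 1"
    and pr: "P' = f ` {..<2^Suc m} - \<Union>{Q \<in> tree_level (f ` {..<2^Suc m}) l.
                 (if c = 0 then is_right_child else is_left_child) (f ` {..<2^Suc m}) Q}"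
  shows "P' = (\<lambda>j. f (ins (m - l) c j)) ` {..<2^m}"
proof -
  define e where "e = m - l"
  have e: "e < m" "Suc e = Suc m - l" unfolding e_def using assms by auto
  have lv: "{Q \<in> tree_level (f ` {..<2^Suc m}) l.
                 (if c = 0 then is_right_child else is_left_child) (f ` {..<2^Suc m}) Q}
        = {vtx f (Suc m) (Suc e) r | r. r < 2^Suc e \<and> \<not> (r < 2^e \<longleftrightarrow> c = 0)}"
  proof -
    have sl: "Suc m - l = Suc e" using e by simp
    have TL: "tree_level (f ` {..<2^Suc m}) l = {vtx f (Suc m) (Suc e) r | r. r < 2^Suc e}"
      using tree_level_char[OF assms(1), of l] assms unfolding sl by simp
    have IFF: "r < 2^Suc e \<Longrightarrow> (if c = 0 then is_right_child else is_left_child) (f ` {..<2^Suc m})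
         (vtx f (Suc m) (Suc e) r) \<longleftrightarrow> \<not> (r < 2^e \<longleftrightarrow> c = 0)" for r
    proof -
      assume r: "r < 2^Suc e"
      have se: "1 \<le> Suc e" "Suc e \<le> Suc m" using e(1) by auto
      have L: "is_left_child (f ` {..<2^Suc m}) (vtx f (Suc m) (Suc e) r) \<longleftrightarrow> r < 2^e"
        using left_child_iff[OF assms(1) se r] by simp
      have R: "is_right_child (f ` {..<2^Suc m}) (vtx f (Suc m) (Suc e) r) \<longleftrightarrow> \<not> r < 2^e"
        using right_child_iff[OF assms(1) se r] by simp
      have "c = 0 \<or> c = 1" using assms(4) by auto
      then show ?thesis using L R by auto
    qed
    show ?thesis
    proof (rule set_eqI, rule iffI)
      fix Q assume "Q \<in> {Q \<in> tree_level (f ` {..<2^Suc m}) l.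
                 (if c = 0 then is_right_child else is_left_child) (f ` {..<2^Suc m}) Q}"
      then obtain r where r: "Q = vtx f (Suc m) (Suc e) r" "r < 2^Suc e"
        "(if c = 0 then is_right_child else is_left_child) (f ` {..<2^Suc m}) Q"
        unfolding TL by blast
      then have "\<not> (r < 2^e \<longleftrightarrow> c = 0)" using IFF[OF r(2)] by simp
      then show "Q \<in> {vtx f (Suc m) (Suc e) r | r. r < 2^Suc e \<and> \<not> (r < 2^e \<longleftrightarrow> c = 0)}"
        using r by blast
    next
      fix Q assume "Q \<in> {vtx f (Suc m) (Suc e) r | r. r < 2^Suc e \<and> \<not> (r < 2^e \<longleftrightarrow> c = 0)}"
      then obtain r where r: "Q = vtx f (Suc m) (Suc e) r" "r < 2^Suc e" "\<not> (r < 2^e \<longleftrightarrow> c = 0)"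
        by blast
      then have "(if c = 0 then is_right_child else is_left_child) (f ` {..<2^Suc m}) Q"
        using IFF[OF r(2)] by simp
      moreover have "Q \<in> tree_level (f ` {..<2^Suc m}) l" unfolding TL using r by blast
      ultimately show "Q \<in> {Q \<in> tree_level (f ` {..<2^Suc m}) l.
                 (if c = 0 then is_right_child else is_left_child) (f ` {..<2^Suc m}) Q}" by blast
    qed
  qed
  have U: "\<Union>{vtx f (Suc m) (Suc e) r | r. r < 2^Suc e \<and> \<not> (r < 2^e \<longleftrightarrow> c = 0)}
     = f ` {j. j < 2^Suc m \<and> \<not> (j mod 2^Suc e < 2^e \<longleftrightarrow> c = 0)}"
    using union_vtx[of "Suc e" "Suc m" f "\<lambda>r. \<not> (r < 2^e \<longleftrightarrow> c = 0)"] e(1) by simp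
  have "P' = f ` {..<2^Suc m} - f ` {j. j < 2^Suc m \<and> \<not> (j mod 2^Suc e < 2^e \<longleftrightarrow> c = 0)}"
    unfolding pr lv U ..
  also have "\<dots> = f ` ({..<2^Suc m} - {j. j < 2^Suc m \<and> \<not> (j mod 2^Suc e < 2^e \<longleftrightarrow> c = 0)})"
    by (rule inj_on_image_set_diff[symmetric, OF sorted_on_inj[OF assms(1)]]) auto
  also have "{..<2^Suc m} - {j. j < 2^Suc m \<and> \<not> (j mod 2^Suc e < 2^e \<longleftrightarrow> c = 0)}
      = ins e c ` {..<2^m}"
    unfolding ins_image[OF e(1) assms(4)] by auto
  finally show ?thesis unfolding e_def by (simp add: image_image)
qed

lemma vtx_sub:
  assumes "d \<le> e" "e < m" "c \<le> 1" "r < 2^d"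
  shows "vtx (\<lambda>j. f (ins e c j)) m d r \<subseteq> vtx f (Suc m) d r"
proof -
  have "vtx (\<lambda>j. f (ins e c j)) m d r = (\<lambda>j. f (ins e c j)) ` {j. j < 2^m \<and> j mod 2^d = r}"
    using vtx_idx[of d m r] assms by simp
  also have "\<dots> \<subseteq> f ` {j. j < 2^Suc m \<and> j mod 2^d = r}"
    using ins_bound[OF _ assms(2,3)] ins_mod[OF assms(1)] by auto
  also have "\<dots> = vtx f (Suc m) d r" by (rule vtx_idx[symmetric]) (use assms in auto)
  finally show ?thesis .
qed



theorem lemma4:
  fixes P P' :: "(int \<times> int) set" and k l :: nat
  assumes iso: "isothetic_horton k P"
    and l1: "1 \<le> l" and l2: "l \<le> k - 1"
    and prune: "P' = prune_left P l \<or> P' = prune_right P l"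
  shows "isothetic_horton (k - 1) P' \<and>
    (l \<le> k - 3 \<longrightarrow>
      (\<forall>l' Q'. l < l' \<longrightarrow> Q' \<in> tree_level P' l' \<longrightarrow>
         (\<exists>Q \<in> tree_level P (l' + 1). Q' \<subseteq> Q \<and>
            (Q' \<noteq> P' \<and> card Q' > 2 \<longrightarrow> S_vertex P' Q' \<subseteq> S_vertex P Q))))"
proof -
  obtain m where k: "k = Suc m" using l1 l2 by (cases k) auto
  have lm: "l \<le> m" using l2 k by simp
  have hP: "horton (Suc m) P" using iso k unfolding isothetic_horton_def by simp
  then have fin: "finite P" "card P = 2^Suc m" "inj_on fst P" by auto
  obtain f where f: "sorted_on f (2^Suc m)" "P = f ` {..<2^Suc m}"
    using exists_sorted[OF fin(1,3)] fin(2) by auto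
  obtain c :: nat where c: "c \<le> 1" and pr: "P' = f ` {..<2^Suc m} - \<Union>{Q \<in> tree_level (f ` {..<2^Suc m}) l.
                 (if c = 0 then is_right_child else is_left_child) (f ` {..<2^Suc m}) Q}"
  proof (cases "P' = prune_left P l")
    case True then show ?thesis
      by (intro that[of 1]) (use f(2) in \<open>simp_all add: prune_left_def\<close>)
  next
    case False then have "P' = prune_right P l" using prune by simp
    then show ?thesis
      by (intro that[of 0]) (use f(2) in \<open>simp_all add: prune_right_def\<close>)
  qed
  define e where "e = m - l"
  have e: "e < m" unfolding e_def using l1 lm by simp
  define g where "g = (\<lambda>j. f (ins e c j))"
  have P'g: "P' = g ` {..<2^m}" unfolding g_def e_def using prune_char[OF f(1) l1 lm c pr] .
  have gs: "sorted_on g (2^m)"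
    unfolding g_def apply (rule sorted_on_comp[OF f(1)])
    apply (erule ins_mono) using ins_bound[OF _ e c] by blast
  have part1: "isothetic_horton (k - 1) P'"
    unfolding isothetic_horton_def P'g g_def using prune_horton[OF _ f(1) e c] hP f(2) k by simp
  have part2: "\<exists>Q \<in> tree_level P (l' + 1). Q' \<subseteq> Q \<and>
            (Q' \<noteq> P' \<and> card Q' > 2 \<longrightarrow> S_vertex P' Q' \<subseteq> S_vertex P Q)"
    if ll: "l < l'" and Q': "Q' \<in> tree_level P' l'" for l' Q'
  proof -
    have l'm: "l' \<le> m" using Q' tree_level_char[OF gs, of l'] P'g by (simp split: if_splits)
    define d where "d = m - l'"
    obtain r where r: "r < 2^d" "Q' = vtx g m d r"
      using Q' tree_level_char[OF gs, of l'] P'g l'm unfolding d_def by auto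
    have de: "d < e" unfolding d_def e_def using ll l'm by simp
    define Q where "Q = vtx f (Suc m) d r"
    have Ql: "Q \<in> tree_level P (l' + 1)"
      using tree_level_char[OF f(1), of "l'+1"] l'm f(2) r unfolding Q_def d_def by auto
    have sub: "Q' \<subseteq> Q" unfolding Q_def r(2) g_def
      using vtx_sub[OF _ e c r(1)] de by simp
    have S: "S_vertex P' Q' \<subseteq> S_vertex P Q" if ne: "Q' \<noteq> P'" and cd: "card Q' > 2"
    proof -
      have d0: "d \<noteq> 0"
      proof
        assume "d = 0" then have "Q' = P'" using r P'g vtx_root[of g m] by simp
        then show False using ne by simp
      qed
      have dm: "d < m"
      proof (rule ccontr)
        assume "\<not> d < m" then have "d = m" unfolding d_def by simp
        then show False using cd vtx_card[OF gs, of d r] r by simp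
      qed
      have lc: "is_left_child P' Q' \<longleftrightarrow> is_left_child P Q"
        using left_child_iff[OF gs, of d r] left_child_iff[OF f(1), of d r] d0 dm r P'g f(2)
        unfolding Q_def by simp
      have r2: "r + 2^d < 2^Suc d" using r by simp
      show ?thesis
      proof (cases "is_left_child P Q")
        case True
        then have "S_vertex P' Q' = vtx g m (Suc d) (r + 2^d)" "S_vertex P Q = vtx f (Suc m) (Suc d) (r + 2^d)"
          unfolding S_vertex_def using lc odds_vtx[OF gs dm r(1)] odds_vtx[OF f(1) _ r(1)] dm r(2)
          unfolding Q_def by auto
        then show ?thesis unfolding g_def using vtx_sub[OF _ e c r2] de by simp
      next
        case False
        then have "S_vertex P' Q' = vtx g m (Suc d) r" "S_vertex P Q = vtx f (Suc m) (Suc d) r"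
          unfolding S_vertex_def using lc evens_vtx[OF gs dm r(1)] evens_vtx[OF f(1) _ r(1)] dm r(2)
          unfolding Q_def by auto
        moreover have "r < 2^Suc d" using r(1) by simp
        ultimately show ?thesis unfolding g_def using vtx_sub[OF _ e c, of "Suc d" r] de by simp
      qed
    qed
    show ?thesis using Ql sub S by blast
  qed
  show ?thesis using part1 part2 by blast
qed

end
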